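(* Let $n\ge 1$, $d\ge 2$ and $1\le k\le n$ be integers, and let $R=n-k\lfloor n/k\rfloor$. For every $k$-separable state $\rho$ on $(\mathbb{C}^d)^{\otimes n}$, the full-body correlation tensor satisfies $$\|\tau(\rho)\|\le \sqrt{(d^2-1)^{k}\,\big(d^{\lceil n/k\rceil-2}\big)^{R}\,\big(d^{\lfloor n/k\rfloor-2}\big)^{k-R}}.$$
   Context: Consider $n$ qudits with Hilbert space $(\mathbb{C}^d)^{\otimes n}$. Let $\lambda_0=\mathbb{1}_d$ and let $\lambda_1,\dots,\lambda_{d^2-1}$ be Hermitian traceless $d\times d$ matrices (generators of $SU(d)$) normalized so that $\mathrm{Tr}[\lambda_i\lambda_j]=d\,\delta_{ij}$ for all $i,j\in\{0,\dots,d^2-1\}$. For a nonempty subset $\alpha\subseteq\{1,\dots,n\}$ and a state $\rho$, let $\rho_\alpha$ be the reduced state on the parties in $\alpha$ and define $\|\tau_\alpha(\rho)\|^2=\sum_{(i_k)_{k\in\alpha}\in\{1,\dots,d^2-1\}^{\alpha}}\big(\mathrm{Tr}[\rho_\alpha\bigotimes_{k\in\alpha}\lambda_{i_k}]\big)^2$. The full-body correlation tensor norm is $\|\tau(\rho)\|:=\|\tau_{\{1,\dots,n\}}(\rho)\|$. A pure state is $k$-separable if it is a tensor product of $k$ pure states on the $k$ blocks of some partition of $\{1,\dots,n\}$ into $k$ nonempty blocks; a (mixed) state is $k$-separable if it is a convex combination of $k$-separable pure states (the partitions may differ between terms). *)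

theory Defs
  imports "HOL-Analysis.Analysis" "HOL-Library.Disjoint_Sets"
begin

text \<open>Computational basis labels of the qudits in a set B of parties:
  functions assigning a level in {0..<d} to each party in B.\<close>
definition configs :: "nat set \<Rightarrow> nat \<Rightarrow> (nat \<Rightarrow> nat) set" where
  "configs B d = PiE B (\<lambda>_. {0..<d})"

text \<open>Operators on (C^d)^{tensor n} are matrices indexed by configs {0..<n} d.
  A family of d x d matrices: lam i a b (entries for a, b < d).\<close>
definition generators :: "nat \<Rightarrow> (nat \<Rightarrow> nat \<Rightarrow> nat \<Rightarrow> complex) \<Rightarrow> bool" where
  "generators d lam \<longleftrightarrow>
     (\<forall>a<d. \<forall>b<d. lam 0 a b = (if a = b then 1 else 0)) \<and>
     (\<forall>i<d^2. \<forall>a<d. \<forall>b<d. lam i b a = cnj (lam i a b)) \<and>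
     (\<forall>i\<in>{1..<d^2}. (\<Sum>a<d. lam i a a) = 0) \<and>
     (\<forall>i<d^2. \<forall>j<d^2. (\<Sum>a<d. \<Sum>b<d. lam i a b * lam j b a)
                        = (if i = j then of_nat d else 0))"

definition corr :: "nat \<Rightarrow> nat \<Rightarrow> (nat \<Rightarrow> nat \<Rightarrow> nat \<Rightarrow> complex)
    \<Rightarrow> ((nat \<Rightarrow> nat) \<Rightarrow> (nat \<Rightarrow> nat) \<Rightarrow> complex) \<Rightarrow> (nat \<Rightarrow> nat) \<Rightarrow> complex" where
  "corr n d lam rho idx =
     (\<Sum>x\<in>configs {0..<n} d. \<Sum>y\<in>configs {0..<n} d.
        rho x y * (\<Prod>k<n. lam (idx k) (y k) (x k)))"

definition tau_sq :: "nat \<Rightarrow> nat \<Rightarrow> (nat \<Rightarrow> nat \<Rightarrow> nat \<Rightarrow> complex)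
    \<Rightarrow> ((nat \<Rightarrow> nat) \<Rightarrow> (nat \<Rightarrow> nat) \<Rightarrow> complex) \<Rightarrow> real" where
  "tau_sq n d lam rho =
     (\<Sum>idx\<in>PiE {0..<n} (\<lambda>_. {1..<d^2}). (cmod (corr n d lam rho idx))^2)"

definition unit_state :: "nat set \<Rightarrow> nat \<Rightarrow> ((nat \<Rightarrow> nat) \<Rightarrow> complex) \<Rightarrow> bool" where
  "unit_state B d psi \<longleftrightarrow> (\<Sum>x\<in>configs B d. (cmod (psi x))^2) = 1"

definition pure_k_separable :: "nat \<Rightarrow> nat \<Rightarrow> nat \<Rightarrow> ((nat \<Rightarrow> nat) \<Rightarrow> complex) \<Rightarrow> bool" where
  "pure_k_separable n d k psi \<longleftrightarrow> unit_state {0..<n} d psi \<and>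
     (\<exists>P phi. partition_on {0..<n} P \<and> card P = k \<and>
        (\<forall>B\<in>P. unit_state B d (phi B)) \<and>
        (\<forall>x\<in>configs {0..<n} d. psi x = (\<Prod>B\<in>P. phi B (restrict x B))))"

definition k_separable :: "nat \<Rightarrow> nat \<Rightarrow> nat \<Rightarrow> ((nat \<Rightarrow> nat) \<Rightarrow> (nat \<Rightarrow> nat) \<Rightarrow> complex) \<Rightarrow> bool" where
  "k_separable n d k rho \<longleftrightarrow>
     (\<exists>(m::nat) p psi. (\<forall>j<m. p j \<ge> (0::real) \<and> pure_k_separable n d k (psi j)) \<and> (\<Sum>j<m. p j) = 1 \<and>
        (\<forall>x\<in>configs {0..<n} d. \<forall>y\<in>configs {0..<n} d.
           rho x y = (\<Sum>j<m. complex_of_real (p j) * psi j x * cnj (psi j y))))"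

end

theory Submission
  imports Defs "Jordan_Normal_Form.Determinant"
begin

lemma sum_PiE_insert:
  assumes "p \<notin> S"
  shows "(\<Sum>x\<in>PiE (insert p S) T. f x) = (\<Sum>a\<in>T p. \<Sum>x\<in>PiE S T. f (x(p:=a)))"
proof -
  have "(\<Sum>x\<in>PiE (insert p S) T. f x) = (\<Sum>(a,x)\<in>T p \<times> PiE S T. f (x(p:=a)))"
    using assms
    by (intro sum.reindex_bij_witness[of _ "\<lambda>(y,g). g(p := y)" "\<lambda>g. (g p, g(p := undefined))"])
       (auto simp: PiE_def extensional_def)
  also have "\<dots> = (\<Sum>a\<in>T p. \<Sum>x\<in>PiE S T. f (x(p:=a)))"
    by (subst sum.cartesian_product) auto
  finally show ?thesis .
qed

definition merge :: "'a set \<Rightarrow> ('a \<Rightarrow> 'b) \<Rightarrow> ('a \<Rightarrow> 'b) \<Rightarrow> 'a \<Rightarrow> 'b" where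
  "merge A a c = (\<lambda>k. if k \<in> A then a k else c k)"

lemma merge_restrict: "g \<in> PiE (A \<union> C) T \<Longrightarrow> merge A (restrict g A) (restrict g C) = g"
  unfolding merge_def restrict_def PiE_def extensional_def by (intro ext) auto

lemma restrict_merge1: "a \<in> PiE A T \<Longrightarrow> restrict (merge A a c) A = a"
  unfolding merge_def restrict_def PiE_def extensional_def by (intro ext) auto

lemma restrict_merge2: "c \<in> PiE C T \<Longrightarrow> A \<inter> C = {} \<Longrightarrow> restrict (merge A a c) C = c"
  unfolding merge_def restrict_def PiE_def extensional_def by (intro ext) auto

lemma merge_PiE: "a \<in> PiE A T \<Longrightarrow> c \<in> PiE C T \<Longrightarrow> merge A a c \<in> PiE (A \<union> C) T"
  unfolding merge_def PiE_def extensional_def by auto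

lemma sum_PiE_Un:
  assumes "A \<inter> C = {}"
  shows "(\<Sum>x\<in>PiE (A \<union> C) T. f x) = (\<Sum>a\<in>PiE A T. \<Sum>c\<in>PiE C T. f (merge A a c))"
proof -
  have "(\<Sum>x\<in>PiE (A \<union> C) T. f x) = (\<Sum>(a,c)\<in>PiE A T \<times> PiE C T. f (merge A a c))"
    apply (rule sum.reindex_bij_witness[of _ "\<lambda>(a,c). merge A a c" "\<lambda>g. (restrict g A, restrict g C)"])
    subgoal by (simp add: merge_restrict)
    subgoal by auto
    subgoal by (clarsimp simp: restrict_merge1 restrict_merge2 assms)
    subgoal by (clarsimp simp: merge_PiE)
    subgoal by (simp add: merge_restrict)
    done
  also have "\<dots> = (\<Sum>a\<in>PiE A T. \<Sum>c\<in>PiE C T. f (merge A a c))"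
    by (subst sum.cartesian_product) auto
  finally show ?thesis .
qed

lemma sum_prod_partition:
  fixes g :: "'a set \<Rightarrow> ('a \<Rightarrow> 'b) \<Rightarrow> 'c::comm_semiring_1"
  assumes "finite P" "\<forall>A\<in>P. \<forall>B\<in>P. A \<noteq> B \<longrightarrow> A \<inter> B = {}"
  shows "(\<Sum>x\<in>PiE (\<Union>P) T. \<Prod>B\<in>P. g B (restrict x B)) = (\<Prod>B\<in>P. \<Sum>x\<in>PiE B T. g B x)"
  using assms
proof (induction P rule: finite_induct)
  case empty
  then show ?case by simp
next
  case (insert B0 P)
  have d1: "B0 \<inter> B = {}" if "B \<in> P" for B
  proof -
    have "B0 \<noteq> B" using that insert.hyps(2) by auto
    moreover have "B0 \<in> insert B0 P" "B \<in> insert B0 P" using that by auto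
    ultimately show ?thesis using insert.prems(1) by blast
  qed
  have disj: "B0 \<inter> \<Union>P = {}" using d1 by auto
  have IH: "(\<Sum>x\<in>PiE (\<Union>P) T. \<Prod>B\<in>P. g B (restrict x B)) = (\<Prod>B\<in>P. \<Sum>x\<in>PiE B T. g B x)"
    using insert.IH insert.prems by blast
  have "(\<Sum>x\<in>PiE (\<Union>(insert B0 P)) T. \<Prod>B\<in>insert B0 P. g B (restrict x B))
      = (\<Sum>a\<in>PiE B0 T. \<Sum>c\<in>PiE (\<Union>P) T. \<Prod>B\<in>insert B0 P. g B (restrict (merge B0 a c) B))"
    unfolding Union_insert by (rule sum_PiE_Un[OF disj])
  also have "\<dots> = (\<Sum>a\<in>PiE B0 T. \<Sum>c\<in>PiE (\<Union>P) T. g B0 a * (\<Prod>B\<in>P. g B (restrict c B)))"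
  proof (intro sum.cong refl)
    fix a c assume a: "a \<in> PiE B0 T" and c: "c \<in> PiE (\<Union>P) T"
    have r0: "restrict (merge B0 a c) B0 = a" using a by (rule restrict_merge1)
    have rB: "restrict (merge B0 a c) B = restrict c B" if "B \<in> P" for B
      using that disj unfolding merge_def restrict_def by (intro ext) auto
    have "(\<Prod>B\<in>insert B0 P. g B (restrict (merge B0 a c) B)) = g B0 (restrict (merge B0 a c) B0) * (\<Prod>B\<in>P. g B (restrict (merge B0 a c) B))"
      using insert.hyps by (rule prod.insert)
    also have "\<dots> = g B0 a * (\<Prod>B\<in>P. g B (restrict c B))"
      using r0 rB by (metis (no_types, lifting) prod.cong)
    finally show "(\<Prod>B\<in>insert B0 P. g B (restrict (merge B0 a c) B)) = g B0 a * (\<Prod>B\<in>P. g B (restrict c B))" .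
  qed
  also have "\<dots> = (\<Sum>a\<in>PiE B0 T. g B0 a) * (\<Sum>c\<in>PiE (\<Union>P) T. \<Prod>B\<in>P. g B (restrict c B))"
    by (simp add: sum_product)
  also have "\<dots> = (\<Prod>B\<in>insert B0 P. \<Sum>x\<in>PiE B T. g B x)"
    using insert.hyps IH by simp
  finally show ?case .
qed

lemma idx_lt: assumes "a < d" "b < (d::nat)" shows "a*d+b < d*d"
proof -
  have "a*d+b < (a+1)*d" using assms by simp
  also have "\<dots> \<le> d*d" using assms by (intro mult_le_mono1) simp
  finally show ?thesis .
qed

lemma sum_div_mod:
  assumes "0 < (d::nat)"
  shows "(\<Sum>q<d*d. f (q div d) (q mod d)) = (\<Sum>a<d. \<Sum>b<d. f a b)"
proof -
  have "(\<Sum>q<d*d. f (q div d) (q mod d)) = (\<Sum>(a,b)\<in>{..<d}\<times>{..<d}. f a b)"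
    apply (rule sum.reindex_bij_witness[of _ "\<lambda>(a,b). a*d+b" "\<lambda>q. (q div d, q mod d)"])
    subgoal by simp
    subgoal using assms by (auto simp: less_mult_imp_div_less)
    subgoal using assms by auto
    subgoal for ab using assms by (cases ab) (auto intro: idx_lt)
    subgoal by simp
    done
  also have "\<dots> = (\<Sum>a<d. \<Sum>b<d. f a b)" by (simp add: sum.cartesian_product)
  finally show ?thesis .
qed


lemma ortho:
  assumes g: "generators d lam" and i: "i < d^2" and j: "j < d^2"
  shows "(\<Sum>a<d. \<Sum>b<d. lam i a b * cnj (lam j a b)) = (if i = j then of_nat d else 0)"
proof -
  have "(\<Sum>a<d. \<Sum>b<d. lam i a b * cnj (lam j a b)) = (\<Sum>a<d. \<Sum>b<d. lam i a b * lam j b a)"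
  proof -
    have h: "\<forall>i<d^2. \<forall>a<d. \<forall>b<d. lam i b a = cnj (lam i a b)"
      using g unfolding generators_def by (elim conjE)
    show ?thesis
    proof (intro sum.cong refl)
      fix a b assume "a \<in> {..<d}" "b \<in> {..<d}"
      then have "lam j b a = cnj (lam j a b)" using h j by blast
      then show "lam i a b * cnj (lam j a b) = lam i a b * lam j b a" by simp
    qed
  qed
  also have "\<dots> = (if i = j then of_nat d else 0)"
  proof -
    have "\<forall>i<d^2. \<forall>j<d^2. (\<Sum>a<d. \<Sum>b<d. lam i a b * lam j b a) = (if i = j then of_nat d else 0)"
      using g unfolding generators_def by (elim conjE)
    then show ?thesis using i j by blast
  qed
  finally show ?thesis .
qed

lemma completeness:
  assumes g: "generators d lam" and "a < d" "b < d" "a' < d" "b' < d"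
  shows "(\<Sum>i<d^2. cnj (lam i a b) * lam i a' b') = (if a = a' \<and> b = b' then of_nat d else 0)"
proof -
  have d0: "0 < d" using assms by simp
  define N where "N = d*d"
  define U :: "complex mat" where "U = mat N N (\<lambda>(i,q). lam i (q div d) (q mod d))"
  define V :: "complex mat" where "V = mat N N (\<lambda>(q,j). cnj (lam j (q div d) (q mod d)) / of_nat d)"
  have U: "U \<in> carrier_mat N N" and V: "V \<in> carrier_mat N N" unfolding U_def V_def by auto
  have "U * V = 1\<^sub>m N"
  proof (rule eq_matI)
    fix i j assume ij: "i < dim_row (1\<^sub>m N)" "j < dim_col (1\<^sub>m N)"
    then have i: "i < d^2" and j: "j < d^2" by (auto simp: N_def power2_eq_square)
    have "(U * V) $$ (i,j) = (\<Sum>q<N. lam i (q div d) (q mod d) * (cnj (lam j (q div d) (q mod d)) / of_nat d))"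
      using ij unfolding U_def V_def by (auto simp: scalar_prod_def lessThan_atLeast0 intro!: sum.cong)
    also have "\<dots> = (\<Sum>a<d. \<Sum>b<d. lam i a b * cnj (lam j a b)) / of_nat d"
      unfolding N_def by (subst sum_div_mod[OF d0]) (simp add: sum_divide_distrib)
    also have "\<dots> = 1\<^sub>m N $$ (i,j)"
      using ortho[OF g i j] ij d0 by auto
    finally show "(U * V) $$ (i,j) = 1\<^sub>m N $$ (i,j)" .
  qed (auto simp: U_def V_def)
  then have VU: "V * U = 1\<^sub>m N" using mat_mult_left_right_inverse[OF U V] by blast
  define q where "q = a*d+b"
  define q' where "q' = a'*d+b'"
  have q: "q < N" "q div d = a" "q mod d = b" using assms idx_lt unfolding q_def N_def by auto
  have q': "q' < N" "q' div d = a'" "q' mod d = b'" using assms idx_lt unfolding q'_def N_def by auto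
  have "(V * U) $$ (q,q') = (\<Sum>i<N. cnj (lam i a b) / of_nat d * lam i a' b')"
    using q q' unfolding U_def V_def by (auto simp: scalar_prod_def lessThan_atLeast0 intro!: sum.cong)
  also have "\<dots> = (\<Sum>i<d^2. cnj (lam i a b) * lam i a' b') / of_nat d"
    by (simp add: N_def power2_eq_square sum_divide_distrib)
  finally have "(\<Sum>i<d^2. cnj (lam i a b) * lam i a' b') = of_nat d * (V * U) $$ (q,q')"
    using d0 by (simp add: field_simps)
  also have "\<dots> = (if a = a' \<and> b = b' then of_nat d else 0)"
  proof -
    have "q = q' \<longleftrightarrow> (a = a' \<and> b = b')" using q q' unfolding q_def q'_def by metis
    then show ?thesis unfolding VU using q q' by simp
  qed
  finally show ?thesis .
qed

lemma completeness':
  assumes g: "generators d lam" and "a < d" "b < d" "a' < d" "b' < d"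
  shows "(\<Sum>i<d^2. lam i a b * cnj (lam i a' b')) = (if a = a' \<and> b = b' then of_nat d else 0)"
proof -
  have "(\<Sum>i<d^2. lam i a b * cnj (lam i a' b')) = cnj (\<Sum>i<d^2. cnj (lam i a b) * lam i a' b')"
    by (simp add: mult.commute)
  also have "\<dots> = (if a = a' \<and> b = b' then of_nat d else 0)"
    using completeness[OF assms] by simp
  finally show ?thesis .
qed

lemma configs_eq:
  assumes "x \<in> configs B d" "x' \<in> configs B d"
  shows "x = x' \<longleftrightarrow> (\<forall>k\<in>B. x k = x' k)"
  using assms unfolding configs_def PiE_def extensional_def by (auto simp: fun_eq_iff)

lemma kernel:
  assumes g: "generators d lam" and fin: "finite B"
    and x: "x \<in> configs B d" and y: "y \<in> configs B d" and x': "x' \<in> configs B d" and y': "y' \<in> configs B d"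
  shows "(\<Sum>idx\<in>PiE B (\<lambda>_. {..<d^2}). (\<Prod>k\<in>B. lam (idx k) (y k) (x k)) * cnj (\<Prod>k\<in>B. lam (idx k) (y' k) (x' k)))
     = (if x = x' \<and> y = y' then of_nat d ^ card B else 0)"
proof -
  have "(\<Sum>idx\<in>PiE B (\<lambda>_. {..<d^2}). (\<Prod>k\<in>B. lam (idx k) (y k) (x k)) * cnj (\<Prod>k\<in>B. lam (idx k) (y' k) (x' k)))
     = (\<Sum>idx\<in>PiE B (\<lambda>_. {..<d^2}). \<Prod>k\<in>B. lam (idx k) (y k) (x k) * cnj (lam (idx k) (y' k) (x' k)))"
    by (simp add: prod.distrib)
  also have "\<dots> = (\<Prod>k\<in>B. \<Sum>i<d^2. lam i (y k) (x k) * cnj (lam i (y' k) (x' k)))"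
    by (rule prod_sum_PiE[symmetric]) (use fin in auto)
  also have "\<dots> = (\<Prod>k\<in>B. if y k = y' k \<and> x k = x' k then of_nat d else 0)"
  proof (rule prod.cong[OF refl])
    fix k assume k: "k \<in> B"
    have "y k < d" "x k < d" "y' k < d" "x' k < d"
      using x y x' y' k unfolding configs_def by auto
    then show "(\<Sum>i<d^2. lam i (y k) (x k) * cnj (lam i (y' k) (x' k))) = (if y k = y' k \<and> x k = x' k then of_nat d else 0)"
      by (rule completeness'[OF g])
  qed
  also have "\<dots> = (if x = x' \<and> y = y' then of_nat d ^ card B else 0)"
  proof (cases "x = x' \<and> y = y'")
    case True
    then show ?thesis by simp
  next
    case False
    then obtain k where k: "k \<in> B" "\<not> (y k = y' k \<and> x k = x' k)"
      using configs_eq[OF x x'] configs_eq[OF y y'] by blast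
    have "(\<Prod>k\<in>B. if y k = y' k \<and> x k = x' k then (of_nat d::complex) else 0) = 0"
      using fin k by (intro prod_zero) auto
    then show ?thesis using False by (simp only: if_False)
  qed
  finally show ?thesis .
qed


lemma finite_configs: "finite B \<Longrightarrow> finite (configs B d)"
  unfolding configs_def by (rule finite_PiE) auto

lemma cns2: "(complex_of_real (cmod z))^2 = z * cnj z"
  by (metis complex_norm_square of_real_power)

lemma prod4:
  fixes f g :: "'a \<Rightarrow> 'b \<Rightarrow> 'c::comm_semiring_1"
  shows "(\<Sum>x\<in>C. \<Sum>y\<in>D. f x y) * (\<Sum>x'\<in>C. \<Sum>y'\<in>D. g x' y') = (\<Sum>x\<in>C. \<Sum>y\<in>D. \<Sum>x'\<in>C. \<Sum>y'\<in>D. f x y * g x' y')"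
  unfolding sum_product by (rule sum.cong[OF refl], rule sum.swap)

lemma parseval:
  assumes g: "generators d lam" and fin: "finite B"
  shows "(\<Sum>idx\<in>PiE B (\<lambda>_. {..<d^2}). (cmod (\<Sum>x\<in>configs B d. \<Sum>y\<in>configs B d. A x y * (\<Prod>k\<in>B. lam (idx k) (y k) (x k))))^2)
        = real d ^ card B * (\<Sum>x\<in>configs B d. \<Sum>y\<in>configs B d. (cmod (A x y))^2)"
proof -
  let ?C = "configs B d"
  let ?I = "PiE B (\<lambda>_. {..<d^2})"
  define L where "L idx x y = (\<Prod>k\<in>B. lam (idx k) (y k) (x k))" for idx and x y :: "nat \<Rightarrow> nat"
  have fC: "finite ?C" using fin by (rule finite_configs)
  have fI: "finite ?I" using fin by (intro finite_PiE) auto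
  have "complex_of_real (\<Sum>idx\<in>?I. (cmod (\<Sum>x\<in>?C. \<Sum>y\<in>?C. A x y * L idx x y))^2)
      = (\<Sum>idx\<in>?I. (\<Sum>x\<in>?C. \<Sum>y\<in>?C. A x y * L idx x y) * cnj (\<Sum>x'\<in>?C. \<Sum>y'\<in>?C. A x' y' * L idx x' y'))"
    by (simp only: of_real_sum complex_norm_square)
  also have "\<dots> = (\<Sum>idx\<in>?I. \<Sum>x\<in>?C. \<Sum>y\<in>?C. \<Sum>x'\<in>?C. \<Sum>y'\<in>?C. A x y * cnj (A x' y') * (L idx x y * cnj (L idx x' y')))"
    unfolding cnj_sum complex_cnj_mult prod4 by (simp add: mult_ac)
  also have "\<dots> = (\<Sum>x\<in>?C. \<Sum>y\<in>?C. \<Sum>x'\<in>?C. \<Sum>y'\<in>?C. A x y * cnj (A x' y') * (\<Sum>idx\<in>?I. L idx x y * cnj (L idx x' y')))"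
    by (simp add: sum_distrib_left sum.swap[of _ ?I])
  also have "\<dots> = (\<Sum>x\<in>?C. \<Sum>y\<in>?C. \<Sum>x'\<in>?C. \<Sum>y'\<in>?C. A x y * cnj (A x' y') * (if x = x' \<and> y = y' then of_nat d ^ card B else 0))"
  proof (intro sum.cong refl)
    fix x y x' y' assume x: "x \<in> ?C" and y: "y \<in> ?C" and x': "x' \<in> ?C" and y': "y' \<in> ?C"
    show "A x y * cnj (A x' y') * (\<Sum>idx\<in>?I. L idx x y * cnj (L idx x' y')) = A x y * cnj (A x' y') * (if x = x' \<and> y = y' then of_nat d ^ card B else 0)"
      using kernel[OF g fin x y x' y'] unfolding L_def by (simp only:)
  qed
  also have "\<dots> = (\<Sum>x\<in>?C. \<Sum>y\<in>?C. A x y * cnj (A x y) * of_nat d ^ card B)"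
  proof (intro sum.cong refl)
    fix x y assume x: "x \<in> ?C" and y: "y \<in> ?C"
    have "(\<Sum>x'\<in>?C. \<Sum>y'\<in>?C. A x y * cnj (A x' y') * (if x = x' \<and> y = y' then of_nat d ^ card B else 0))
        = (\<Sum>x'\<in>?C. if x = x' then A x y * cnj (A x' y) * of_nat d ^ card B else 0)"
      by (intro sum.cong refl) (auto simp: fC y if_distrib cong: if_cong)
    also have "\<dots> = A x y * cnj (A x y) * of_nat d ^ card B"
      using fC x by simp
    finally show "(\<Sum>x'\<in>?C. \<Sum>y'\<in>?C. A x y * cnj (A x' y') * (if x = x' \<and> y = y' then of_nat d ^ card B else 0))
        = A x y * cnj (A x y) * of_nat d ^ card B" .
  qed
  also have "\<dots> = complex_of_real (real d ^ card B * (\<Sum>x\<in>?C. \<Sum>y\<in>?C. (cmod (A x y))^2))"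
    by (simp add: of_real_sum cns2 sum_distrib_left sum_distrib_right mult_ac)
  finally show ?thesis unfolding L_def by (simp only: of_real_eq_iff)
qed

lemma swap4:
  fixes T :: "'a \<Rightarrow> 'a \<Rightarrow> 'b \<Rightarrow> 'b \<Rightarrow> 'c::comm_monoid_add"
  shows "(\<Sum>u\<in>X. \<Sum>v\<in>X. \<Sum>a\<in>D. \<Sum>b\<in>D. T a b u v) = (\<Sum>a\<in>D. \<Sum>b\<in>D. \<Sum>u\<in>X. \<Sum>v\<in>X. T a b u v)"
proof -
  have "(\<Sum>u\<in>X. \<Sum>v\<in>X. \<Sum>a\<in>D. \<Sum>b\<in>D. T a b u v) = (\<Sum>u\<in>X. \<Sum>a\<in>D. \<Sum>v\<in>X. \<Sum>b\<in>D. T a b u v)"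
    by (rule sum.cong[OF refl], rule sum.swap)
  also have "\<dots> = (\<Sum>a\<in>D. \<Sum>u\<in>X. \<Sum>v\<in>X. \<Sum>b\<in>D. T a b u v)"
    by (rule sum.swap)
  also have "\<dots> = (\<Sum>a\<in>D. \<Sum>u\<in>X. \<Sum>b\<in>D. \<Sum>v\<in>X. T a b u v)"
    by (rule sum.cong[OF refl], rule sum.cong[OF refl], rule sum.swap)
  also have "\<dots> = (\<Sum>a\<in>D. \<Sum>b\<in>D. \<Sum>u\<in>X. \<Sum>v\<in>X. T a b u v)"
    by (rule sum.cong[OF refl], rule sum.swap)
  finally show ?thesis .
qed

lemma gram:
  fixes w :: "nat \<Rightarrow> 'x \<Rightarrow> complex"
  assumes fX: "finite X" and d: "0 < d"
  shows "(\<Sum>a<d. \<Sum>u\<in>X. (cmod (w a u))^2)^2 / real d \<le> (\<Sum>u\<in>X. \<Sum>v\<in>X. (cmod (\<Sum>a<d. w a u * cnj (w a v)))^2)"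
proof -
  define M where "M a b = (\<Sum>u\<in>X. w a u * cnj (w b u))" for a b
  define r where "r a = (\<Sum>u\<in>X. (cmod (w a u))^2)" for a
  have "complex_of_real (\<Sum>u\<in>X. \<Sum>v\<in>X. (cmod (\<Sum>a<d. w a u * cnj (w a v)))^2)
      = (\<Sum>u\<in>X. \<Sum>v\<in>X. \<Sum>a<d. \<Sum>b<d. w a u * cnj (w a v) * (cnj (w b u) * w b v))"
    by (simp add: of_real_sum cns2 sum_product)
  also have "\<dots> = (\<Sum>a<d. \<Sum>b<d. \<Sum>u\<in>X. \<Sum>v\<in>X. w a u * cnj (w a v) * (cnj (w b u) * w b v))"
    by (rule swap4)
  also have "\<dots> = complex_of_real (\<Sum>a<d. \<Sum>b<d. (cmod (M a b))^2)"
    by (simp add: of_real_sum cns2 sum_product M_def mult_ac)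
  finally have eq: "(\<Sum>u\<in>X. \<Sum>v\<in>X. (cmod (\<Sum>a<d. w a u * cnj (w a v)))^2) = (\<Sum>a<d. \<Sum>b<d. (cmod (M a b))^2)"
    by (simp only: of_real_eq_iff)
  have Maa: "cmod (M a a) = r a" for a
  proof -
    have "M a a = complex_of_real (r a)"
      unfolding M_def r_def by (simp add: of_real_sum cns2)
    moreover have "r a \<ge> 0" unfolding r_def by (simp add: sum_nonneg)
    ultimately show ?thesis by simp
  qed
  have "(\<Sum>a<d. r a)^2 \<le> (\<Sum>a<d. (r a)^2) * card {..<d}"
    by (rule sum_squared_le_sum_of_squares)
  then have "(\<Sum>a<d. r a)^2 / real d \<le> (\<Sum>a<d. (r a)^2)"
    using d by (simp add: divide_simps)
  also have "\<dots> = (\<Sum>a<d. (cmod (M a a))^2)" by (simp add: Maa)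
  also have "\<dots> \<le> (\<Sum>a<d. \<Sum>b<d. (cmod (M a b))^2)"
    by (intro sum_mono member_le_sum) auto
  finally show ?thesis unfolding eq r_def .
qed

lemma c0_split:
  fixes psi :: "(nat \<Rightarrow> nat) \<Rightarrow> complex"
  assumes lam0: "\<forall>a<d. \<forall>b<d. lam 0 a b = (if a = b then 1 else 0)"
    and pS: "p \<notin> S" and fS: "finite S"
  shows "(\<Sum>x\<in>configs (insert p S) d. \<Sum>y\<in>configs (insert p S) d. psi x * cnj (psi y) * (\<Prod>k\<in>insert p S. lam ((j(p:=0)) k) (y k) (x k)))
    = (\<Sum>u\<in>configs S d. \<Sum>v\<in>configs S d. (\<Sum>a<d. psi (u(p:=a)) * cnj (psi (v(p:=a)))) * (\<Prod>k\<in>S. lam (j k) (v k) (u k)))"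
proof -
  define P where "P u v = (\<Prod>k\<in>S. lam (j k) (v k) (u k))" for u v :: "nat \<Rightarrow> nat"
  have prod_eq: "(\<Prod>k\<in>insert p S. lam ((j(p:=0)) k) ((v(p:=b)) k) ((u(p:=a)) k)) = lam 0 b a * P u v" for u v a b
  proof -
    have "(\<Prod>k\<in>insert p S. lam ((j(p:=0)) k) ((v(p:=b)) k) ((u(p:=a)) k))
        = lam 0 b a * (\<Prod>k\<in>S. lam ((j(p:=0)) k) ((v(p:=b)) k) ((u(p:=a)) k))"
      using pS fS by simp
    also have "(\<Prod>k\<in>S. lam ((j(p:=0)) k) ((v(p:=b)) k) ((u(p:=a)) k)) = P u v"
      unfolding P_def using pS by (intro prod.cong refl) auto
    finally show ?thesis .
  qed
  have "(\<Sum>x\<in>configs (insert p S) d. \<Sum>y\<in>configs (insert p S) d. psi x * cnj (psi y) * (\<Prod>k\<in>insert p S. lam ((j(p:=0)) k) (y k) (x k)))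
      = (\<Sum>a\<in>{0..<d}. \<Sum>u\<in>configs S d. \<Sum>b\<in>{0..<d}. \<Sum>v\<in>configs S d. psi (u(p:=a)) * cnj (psi (v(p:=b))) * (lam 0 b a * P u v))"
    unfolding configs_def sum_PiE_insert[OF pS] by (simp only: prod_eq)
  also have "\<dots> = (\<Sum>a\<in>{0..<d}. \<Sum>u\<in>configs S d. \<Sum>v\<in>configs S d. psi (u(p:=a)) * cnj (psi (v(p:=a))) * P u v)"
  proof (intro sum.cong refl)
    fix a u assume a: "a \<in> {0..<d}"
    have "(\<Sum>b\<in>{0..<d}. \<Sum>v\<in>configs S d. psi (u(p:=a)) * cnj (psi (v(p:=b))) * (lam 0 b a * P u v))
        = (\<Sum>b\<in>{0..<d}. if b = a then (\<Sum>v\<in>configs S d. psi (u(p:=a)) * cnj (psi (v(p:=b))) * P u v) else 0)"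
    proof (intro sum.cong refl)
      fix b assume b: "b \<in> {0..<d}"
      then have "lam 0 b a = (if b = a then 1 else 0)" using a lam0 by auto
      then show "(\<Sum>v\<in>configs S d. psi (u(p:=a)) * cnj (psi (v(p:=b))) * (lam 0 b a * P u v))
        = (if b = a then (\<Sum>v\<in>configs S d. psi (u(p:=a)) * cnj (psi (v(p:=b))) * P u v) else 0)"
        by simp
    qed
    also have "\<dots> = (\<Sum>v\<in>configs S d. psi (u(p:=a)) * cnj (psi (v(p:=a))) * P u v)"
      using a by (simp add: sum.delta')
    finally show "(\<Sum>b\<in>{0..<d}. \<Sum>v\<in>configs S d. psi (u(p:=a)) * cnj (psi (v(p:=b))) * (lam 0 b a * P u v))
        = (\<Sum>v\<in>configs S d. psi (u(p:=a)) * cnj (psi (v(p:=a))) * P u v)" .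
  qed
  also have "\<dots> = (\<Sum>u\<in>configs S d. \<Sum>a\<in>{0..<d}. \<Sum>v\<in>configs S d. psi (u(p:=a)) * cnj (psi (v(p:=a))) * P u v)"
    by (rule sum.swap)
  also have "\<dots> = (\<Sum>u\<in>configs S d. \<Sum>v\<in>configs S d. \<Sum>a\<in>{0..<d}. psi (u(p:=a)) * cnj (psi (v(p:=a))) * P u v)"
    by (rule sum.cong[OF refl], rule sum.swap)
  also have "\<dots> = (\<Sum>u\<in>configs S d. \<Sum>v\<in>configs S d. (\<Sum>a<d. psi (u(p:=a)) * cnj (psi (v(p:=a)))) * P u v)"
    by (simp add: sum_distrib_right atLeast0LessThan)
  finally show ?thesis unfolding P_def .
qed


lemma block_bound:
  fixes psi :: "(nat \<Rightarrow> nat) \<Rightarrow> complex"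
  assumes g: "generators d lam" and fin: "finite B" and p: "p \<in> B" and d: "0 < d"
    and unit: "(\<Sum>x\<in>configs B d. (cmod (psi x))^2) = 1"
  shows "(\<Sum>idx\<in>PiE B (\<lambda>_. {1..<d^2}). (cmod (\<Sum>x\<in>configs B d. \<Sum>y\<in>configs B d. psi x * cnj (psi y) * (\<Prod>k\<in>B. lam (idx k) (y k) (x k))))^2)
     \<le> real d ^ card B - real d ^ (card B - 1) / real d"
proof -
  define S where "S = B - {p}"
  have B: "B = insert p S" and pS: "p \<notin> S" and fS: "finite S" using p fin unfolding S_def by auto
  have cardS: "card S = card B - 1" unfolding S_def using p fin by simp
  have lam0: "\<forall>a<d. \<forall>b<d. lam 0 a b = (if a = b then 1 else 0)"
    using g unfolding generators_def by (elim conjE)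
  define f where "f idx = (cmod (\<Sum>x\<in>configs B d. \<Sum>y\<in>configs B d. psi x * cnj (psi y) * (\<Prod>k\<in>B. lam (idx k) (y k) (x k))))^2" for idx
  have f0: "f idx \<ge> 0" for idx unfolding f_def by simp
  define I1 where "I1 = PiE S (\<lambda>_::nat. {1..<d^2})"
  define I0 where "I0 = PiE S (\<lambda>_::nat. {..<d^2})"
  have fI0: "finite I0" unfolding I0_def using fS by (intro finite_PiE) auto
  have I10: "I1 \<subseteq> I0" unfolding I1_def I0_def by (intro PiE_mono) auto
  define G where "G = (\<Sum>a\<in>{1..<d^2}. \<Sum>j\<in>I0. f (j(p:=a)))"
  define H where "H = (\<Sum>j\<in>I0. f (j(p:=0)))"
  have "(\<Sum>idx\<in>PiE B (\<lambda>_. {1..<d^2}). f idx) = (\<Sum>a\<in>{1..<d^2}. \<Sum>j\<in>I1. f (j(p:=a)))"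
    unfolding B I1_def by (rule sum_PiE_insert[OF pS])
  also have "\<dots> \<le> G"
    unfolding G_def by (intro sum_mono sum_mono2 fI0 I10 f0)
  finally have FG: "(\<Sum>idx\<in>PiE B (\<lambda>_. {1..<d^2}). f idx) \<le> G" .
  have "(\<Sum>idx\<in>PiE B (\<lambda>_. {..<d^2}). f idx) = (\<Sum>a\<in>{..<d^2}. \<Sum>j\<in>I0. f (j(p:=a)))"
    unfolding B I0_def by (rule sum_PiE_insert[OF pS])
  also have "\<dots> = H + G"
  proof -
    have e: "{..<d^2} = insert 0 {1..<d^2}" using d by auto
    show ?thesis unfolding H_def G_def e by simp
  qed
  finally have tot1: "(\<Sum>idx\<in>PiE B (\<lambda>_. {..<d^2}). f idx) = H + G" .
  have "(\<Sum>idx\<in>PiE B (\<lambda>_. {..<d^2}). f idx) = real d ^ card B * (\<Sum>x\<in>configs B d. \<Sum>y\<in>configs B d. (cmod (psi x * cnj (psi y)))^2)"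
    unfolding f_def by (rule parseval[OF g fin])
  also have "(\<Sum>x\<in>configs B d. \<Sum>y\<in>configs B d. (cmod (psi x * cnj (psi y)))^2) = (\<Sum>x\<in>configs B d. (cmod (psi x))^2) * (\<Sum>y\<in>configs B d. (cmod (psi y))^2)"
    by (simp add: sum_product norm_mult power_mult_distrib)
  finally have tot2: "(\<Sum>idx\<in>PiE B (\<lambda>_. {..<d^2}). f idx) = real d ^ card B" using unit by simp
  define A' where "A' u v = (\<Sum>a<d. psi (u(p:=a)) * cnj (psi (v(p:=a))))" for u v
  have "H = (\<Sum>j\<in>I0. (cmod (\<Sum>u\<in>configs S d. \<Sum>v\<in>configs S d. A' u v * (\<Prod>k\<in>S. lam (j k) (v k) (u k))))^2)"
    unfolding H_def f_def B A'_def using c0_split[of d lam p S, OF lam0 pS fS] by simp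
  also have "\<dots> = real d ^ card S * (\<Sum>u\<in>configs S d. \<Sum>v\<in>configs S d. (cmod (A' u v))^2)"
    unfolding I0_def by (rule parseval[OF g fS])
  finally have Heq: "H = real d ^ card S * (\<Sum>u\<in>configs S d. \<Sum>v\<in>configs S d. (cmod (A' u v))^2)" .
  have "(\<Sum>a<d. \<Sum>u\<in>configs S d. (cmod (psi (u(p:=a))))^2) = (\<Sum>x\<in>configs B d. (cmod (psi x))^2)"
    unfolding B configs_def sum_PiE_insert[OF pS] by (simp add: atLeast0LessThan)
  then have "1 / real d \<le> (\<Sum>u\<in>configs S d. \<Sum>v\<in>configs S d. (cmod (A' u v))^2)"
    using gram[OF finite_configs[OF fS, of d] d, of "\<lambda>a u. psi (u(p:=a))"] unit unfolding A'_def by simp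
  then have "real d ^ card S * (1 / real d) \<le> H"
    unfolding Heq by (intro mult_left_mono) auto
  then have "real d ^ (card B - 1) / real d \<le> H" unfolding cardS by simp
  with FG tot1 tot2 show ?thesis unfolding f_def by linarith
qed

lemma partition_facts:
  fixes n :: nat
  assumes "partition_on {0..<n} P"
  shows "\<Union>P = {0..<n}" "finite P" "\<forall>A\<in>P. \<forall>B\<in>P. A \<noteq> B \<longrightarrow> A \<inter> B = {}" "\<forall>B\<in>P. finite B"
    "\<forall>B\<in>P. B \<noteq> {}" "pairwise disjnt P"
proof -
  show U: "\<Union>P = {0..<n}" using assms unfolding partition_on_def by blast
  have "P \<subseteq> Pow {0..<n}" using U by blast
  then show "finite P" by (rule finite_subset) simp
  show "pairwise disjnt P" using assms unfolding partition_on_def disjoint_def pairwise_def by blast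
  then show "\<forall>A\<in>P. \<forall>B\<in>P. A \<noteq> B \<longrightarrow> A \<inter> B = {}" unfolding pairwise_def disjnt_def by blast
  show "\<forall>B\<in>P. finite B" using U by (metis Union_upper finite_atLeastLessThan finite_subset)
  show "\<forall>B\<in>P. B \<noteq> {}" using assms unfolding partition_on_def by blast
qed

lemma corr_factor:
  fixes psi :: "(nat \<Rightarrow> nat) \<Rightarrow> complex"
  assumes P: "partition_on {0..<n} P"
    and psi: "\<forall>x\<in>configs {0..<n} d. psi x = (\<Prod>B\<in>P. phi B (restrict x B))"
  shows "corr n d lam (\<lambda>x y. psi x * cnj (psi y)) idx
     = (\<Prod>B\<in>P. \<Sum>x\<in>configs B d. \<Sum>y\<in>configs B d. phi B x * cnj (phi B y) * (\<Prod>k\<in>B. lam (restrict idx B k) (y k) (x k)))"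
proof -
  note pf = partition_facts[OF P]
  define h where "h B xB yB = phi B xB * cnj (phi B yB) * (\<Prod>k\<in>B. lam (restrict idx B k) (yB k) (xB k))"
    for B and xB yB :: "nat \<Rightarrow> nat"
  have C: "configs {0..<n} d = PiE (\<Union>P) (\<lambda>_. {0..<d})" unfolding configs_def pf(1) ..
  have summand: "psi x * cnj (psi y) * (\<Prod>k<n. lam (idx k) (y k) (x k)) = (\<Prod>B\<in>P. h B (restrict x B) (restrict y B))"
    if x: "x \<in> configs {0..<n} d" and y: "y \<in> configs {0..<n} d" for x y
  proof -
    have "(\<Prod>k<n. lam (idx k) (y k) (x k)) = (\<Prod>k\<in>\<Union>P. lam (idx k) (y k) (x k))"
      unfolding pf(1) by (simp add: lessThan_atLeast0)
    also have "\<dots> = (\<Prod>B\<in>P. \<Prod>k\<in>B. lam (idx k) (y k) (x k))"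
      using pf(3,4) by (simp add: prod.Union_disjoint)
    also have "\<dots> = (\<Prod>B\<in>P. \<Prod>k\<in>B. lam (restrict idx B k) (restrict y B k) (restrict x B k))"
      by (intro prod.cong refl) simp
    finally have e: "(\<Prod>k<n. lam (idx k) (y k) (x k)) = (\<Prod>B\<in>P. \<Prod>k\<in>B. lam (restrict idx B k) (restrict y B k) (restrict x B k))" .
    show ?thesis unfolding h_def e psi[rule_format, OF x] psi[rule_format, OF y] cnj_prod prod.distrib ..
  qed
  have "corr n d lam (\<lambda>x y. psi x * cnj (psi y)) idx = (\<Sum>x\<in>configs {0..<n} d. \<Sum>y\<in>configs {0..<n} d. \<Prod>B\<in>P. h B (restrict x B) (restrict y B))"
    unfolding corr_def by (intro sum.cong refl) (simp add: summand)
  also have "\<dots> = (\<Sum>x\<in>configs {0..<n} d. \<Prod>B\<in>P. \<Sum>yB\<in>PiE B (\<lambda>_. {0..<d}). h B (restrict x B) yB)"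
    unfolding C by (intro sum.cong refl sum_prod_partition pf(2,3))
  also have "\<dots> = (\<Prod>B\<in>P. \<Sum>xB\<in>PiE B (\<lambda>_. {0..<d}). \<Sum>yB\<in>PiE B (\<lambda>_. {0..<d}). h B xB yB)"
    unfolding C by (intro sum_prod_partition pf(2,3))
  finally show ?thesis unfolding h_def configs_def .
qed


lemma pure_bound:
  assumes g: "generators d lam" and d: "0 < d" and ps: "pure_k_separable n d k psi"
  shows "tau_sq n d lam (\<lambda>x y. psi x * cnj (psi y)) \<le> ((real d^2 - 1) / real d^2)^k * real d^n"
proof -
  obtain P phi where P: "partition_on {0..<n} P" and cP: "card P = k"
    and units: "\<forall>B\<in>P. unit_state B d (phi B)"
    and psi: "\<forall>x\<in>configs {0..<n} d. psi x = (\<Prod>B\<in>P. phi B (restrict x B))"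
    using ps unfolding pure_k_separable_def by blast
  note pf = partition_facts[OF P]
  define cB where "cB B j = (\<Sum>x\<in>configs B d. \<Sum>y\<in>configs B d. phi B x * cnj (phi B y) * (\<Prod>k\<in>B. lam (j k) (y k) (x k)))"
    for B and j :: "nat \<Rightarrow> nat"
  have cf: "corr n d lam (\<lambda>x y. psi x * cnj (psi y)) idx = (\<Prod>B\<in>P. cB B (restrict idx B))" for idx
    unfolding corr_factor[OF P psi] cB_def ..
  define bnd where "bnd m = real d ^ m - real d ^ (m - 1) / real d" for m
  have "tau_sq n d lam (\<lambda>x y. psi x * cnj (psi y)) = (\<Sum>idx\<in>PiE (\<Union>P) (\<lambda>_. {1..<d^2}). \<Prod>B\<in>P. (cmod (cB B (restrict idx B)))^2)"
    unfolding tau_sq_def cf pf(1) by (simp add: prod_norm[symmetric] prod_power_distrib)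
  also have "\<dots> = (\<Prod>B\<in>P. \<Sum>j\<in>PiE B (\<lambda>_. {1..<d^2}). (cmod (cB B j))^2)"
    by (intro sum_prod_partition pf(2,3))
  also have "\<dots> \<le> (\<Prod>B\<in>P. bnd (card B))"
  proof (intro prod_mono conjI)
    fix B assume B: "B \<in> P"
    show "0 \<le> (\<Sum>j\<in>PiE B (\<lambda>_. {1..<d^2}). (cmod (cB B j))^2)" by (simp add: sum_nonneg)
    obtain p where p: "p \<in> B" using pf(5) B by blast
    have u: "(\<Sum>x\<in>configs B d. (cmod (phi B x))^2) = 1" using units B unfolding unit_state_def by blast
    show "(\<Sum>j\<in>PiE B (\<lambda>_. {1..<d^2}). (cmod (cB B j))^2) \<le> bnd (card B)"
      unfolding cB_def bnd_def using block_bound[OF g _ p d u] pf(4) B by blast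
  qed
  also have "\<dots> = (\<Prod>B\<in>P. (real d^2 - 1) / real d^2 * real d ^ card B)"
  proof (intro prod.cong refl)
    fix B assume B: "B \<in> P"
    then have "card B \<noteq> 0" using pf(4,5) by auto
    then obtain m where m: "card B = Suc m" using not0_implies_Suc by blast
    show "bnd (card B) = (real d^2 - 1) / real d^2 * real d ^ card B"
      unfolding bnd_def m using d by (simp add: field_simps power2_eq_square)
  qed
  also have "\<dots> = ((real d^2 - 1) / real d^2)^k * real d ^ (\<Sum>B\<in>P. card B)"
    by (simp only: prod.distrib prod_constant cP power_sum)
  also have "(\<Sum>B\<in>P. card B) = n"
    using card_Union_disjoint[OF pf(6)] pf(1,4) by simp
  finally show ?thesis .
qed

lemma convex_sq:
  fixes p r :: "nat \<Rightarrow> real"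
  assumes p: "\<forall>j<m. p j \<ge> 0" and s: "(\<Sum>j<m. p j) = 1"
  shows "(\<Sum>j<m. p j * r j)^2 \<le> (\<Sum>j<m. p j * (r j)^2)"
proof -
  have "(\<Sum>j<m. p j * r j)^2 = (\<Sum>j<m. sqrt (p j) * (sqrt (p j) * r j))^2"
    using p by (intro arg_cong[where f="\<lambda>x. x^2"] sum.cong refl)
      (simp add: mult.assoc[symmetric] real_sqrt_mult[symmetric])
  also have "\<dots> \<le> (\<Sum>j<m. (sqrt (p j))^2) * (\<Sum>j<m. (sqrt (p j) * r j)^2)"
    by (rule Cauchy_Schwarz_ineq_sum)
  also have "\<dots> = (\<Sum>j<m. p j * (r j)^2)"
    using p s by (simp add: power_mult_distrib)
  finally show ?thesis .
qed

lemma mixed_bound: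
  assumes g: "generators d lam" and d: "0 < d" and ks: "k_separable n d k rho"
  shows "tau_sq n d lam rho \<le> ((real d^2 - 1) / real d^2)^k * real d^n"
proof -
  obtain m :: nat and p psi where pp: "\<forall>j<m. p j \<ge> (0::real) \<and> pure_k_separable n d k (psi j)"
    and s: "(\<Sum>j<m. p j) = 1"
    and rho: "\<forall>x\<in>configs {0..<n} d. \<forall>y\<in>configs {0..<n} d.
           rho x y = (\<Sum>j<m. complex_of_real (p j) * psi j x * cnj (psi j y))"
    using ks unfolding k_separable_def by blast
  define Bnd where "Bnd = ((real d^2 - 1) / real d^2)^k * real d^n"
  let ?C = "configs {0..<n} d"
  define cj where "cj j idx = corr n d lam (\<lambda>x y. psi j x * cnj (psi j y)) idx" for j idx
  have cr: "corr n d lam rho idx = (\<Sum>j<m. complex_of_real (p j) * cj j idx)" for idx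
  proof -
    have "corr n d lam rho idx = (\<Sum>x\<in>?C. \<Sum>y\<in>?C. \<Sum>j<m. complex_of_real (p j) * (psi j x * cnj (psi j y) * (\<Prod>k<n. lam (idx k) (y k) (x k))))"
      unfolding corr_def using rho by (intro sum.cong refl) (simp add: sum_distrib_right mult.assoc)
    also have "\<dots> = (\<Sum>j<m. complex_of_real (p j) * cj j idx)"
      unfolding cj_def corr_def sum_distrib_left
      by (subst sum.swap, rule sum.cong[OF refl], rule sum.swap)
    finally show ?thesis .
  qed
  have pt: "\<forall>j<m. p j \<ge> 0" using pp by blast
  have "tau_sq n d lam rho \<le> (\<Sum>idx\<in>PiE {0..<n} (\<lambda>_. {1..<d^2}). \<Sum>j<m. p j * (cmod (cj j idx))^2)"
    unfolding tau_sq_def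
  proof (rule sum_mono)
    fix idx
    have "cmod (corr n d lam rho idx) \<le> (\<Sum>j<m. p j * cmod (cj j idx))"
      unfolding cr using pt by (rule_tac order_trans[OF norm_sum]) (simp add: norm_mult)
    then have "(cmod (corr n d lam rho idx))^2 \<le> (\<Sum>j<m. p j * cmod (cj j idx))^2"
      by (intro power_mono) auto
    also have "\<dots> \<le> (\<Sum>j<m. p j * (cmod (cj j idx))^2)"
      by (rule convex_sq[OF pt s])
    finally show "(cmod (corr n d lam rho idx))^2 \<le> (\<Sum>j<m. p j * (cmod (cj j idx))^2)" .
  qed
  also have "\<dots> = (\<Sum>j<m. p j * tau_sq n d lam (\<lambda>x y. psi j x * cnj (psi j y)))"
    unfolding tau_sq_def cj_def by (subst sum.swap) (simp add: sum_distrib_left)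
  also have "\<dots> \<le> (\<Sum>j<m. p j * Bnd)"
    using pp unfolding Bnd_def by (intro sum_mono mult_left_mono pure_bound[OF g d]) auto
  also have "\<dots> = Bnd" using s by (simp add: sum_distrib_right[symmetric])
  finally show ?thesis unfolding Bnd_def .
qed

lemma exponent_identity:
  fixes n k :: nat
  assumes k: "1 \<le> k" and d: "0 < (D::real)"
  defines "R \<equiv> n - k * nat \<lfloor>real n / real k\<rfloor>"
  shows "(D powr (real_of_int \<lceil>real n / real k\<rceil> - 2)) ^ R * (D powr (real_of_int \<lfloor>real n / real k\<rfloor> - 2)) ^ (k - R)
     = D ^ n / D ^ (2*k)"
proof -
  define f where "f = n div k"
  have fl: "\<lfloor>real n / real k\<rfloor> = int f" unfolding f_def using floor_divide_of_nat_eq[of n k] by simp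
  have R: "R = n mod k" unfolding R_def fl f_def by (simp add: minus_mult_div_eq_mod)
  have nk: "n = k * f + R" unfolding R f_def by simp
  have Rk: "R < k" using k unfolding R by simp
  have ce: "\<lceil>real n / real k\<rceil> = (if R = 0 then int f else int f + 1)"
  proof (cases "R = 0")
    case True
    then have "real n / real k = real f" using nk k by (simp add: field_simps)
    then show ?thesis using True by simp
  next
    case False
    have "real n / real k = real f + real R / real k" using nk k by (simp add: field_simps)
    moreover have "0 < real R / real k" "real R / real k < 1" using False Rk k by auto
    ultimately show ?thesis using False by (simp add: ceiling_eq_iff)
  qed
  have "(D powr (real_of_int \<lceil>real n / real k\<rceil> - 2)) ^ R * (D powr (real_of_int \<lfloor>real n / real k\<rfloor> - 2)) ^ (k - R)
      = D powr (real R * (real_of_int \<lceil>real n / real k\<rceil> - 2) + real (k - R) * (real f - 2))"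
    using d by (simp add: powr_power powr_add fl)
  also have "real R * (real_of_int \<lceil>real n / real k\<rceil> - 2) + real (k - R) * (real f - 2) = real n - real (2*k)"
  proof -
    have "real (k - R) = real k - real R" using Rk by simp
    moreover have "real n = real k * real f + real R" using nk by simp
    ultimately show ?thesis unfolding ce by (cases "R = 0") (simp_all add: algebra_simps)
  qed
  also have "D powr (real n - real (2*k)) = D ^ n / D ^ (2*k)"
    unfolding powr_diff powr_realpow[OF d] ..
  finally show ?thesis .
qed

theorem theorem1:
  fixes n d k :: nat
    and lam :: "nat \<Rightarrow> nat \<Rightarrow> nat \<Rightarrow> complex"
    and rho :: "(nat \<Rightarrow> nat) \<Rightarrow> (nat \<Rightarrow> nat) \<Rightarrow> complex"
  assumes "n \<ge> 1" and "d \<ge> 2" and "1 \<le> k" and "k \<le> n"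
    and "generators d lam"
    and "k_separable n d k rho"
  defines "R \<equiv> n - k * nat \<lfloor>real n / real k\<rfloor>"
  shows "sqrt (tau_sq n d lam rho)
    \<le> sqrt ((real d ^ 2 - 1) ^ k
         * (real d powr (real_of_int \<lceil>real n / real k\<rceil> - 2)) ^ R
         * (real d powr (real_of_int \<lfloor>real n / real k\<rfloor> - 2)) ^ (k - R))"
proof -
  have d: "0 < d" using assms(2) by simp
  have dr: "0 < real d" using d by simp
  have "tau_sq n d lam rho \<le> ((real d^2 - 1) / real d^2)^k * real d^n"
    by (rule mixed_bound[OF assms(5) d assms(6)])
  also have "\<dots> = (real d ^ 2 - 1) ^ k * (real d ^ n / real d ^ (2*k))"
    by (simp add: power_divide power_mult)
  also have "\<dots> = (real d ^ 2 - 1) ^ k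
         * (real d powr (real_of_int \<lceil>real n / real k\<rceil> - 2)) ^ R
         * (real d powr (real_of_int \<lfloor>real n / real k\<rfloor> - 2)) ^ (k - R)"
    using exponent_identity[OF assms(3) dr, of n] unfolding R_def by (simp add: mult.assoc)
  finally show ?thesis by (rule real_sqrt_le_mono)
qed

end
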